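(* Consider a vertex model on the (periodic) hexagonal lattice in which every vertex has the same signature $r=(x_1,\dots,x_8)$. For a generic choice of $r$ (i.e. outside a proper algebraic subset of signatures), the model is realizable if and only if it is orthogonally realizable.
   Context: Signatures are vectors indexed by local configurations $000,001,\dots,111$ of the incident $(a,b,c)$-edges. A realization assigns to each edge $e$ an invertible $2\times2$ matrix $T_e$ and to each vertex a matchgate signature $m_v$ with $m_v=(T_a\otimes T_b\otimes T_c)r_v$ at black vertices and $m_v=((T_a\otimes T_b\otimes T_c)^t)^{-1}r_v$ at white vertices, every $m_v$ satisfying the parity constraint (vanishing on all binary strings of one parity); the model is realizable if a realization exists, and orthogonally realizable if a realization exists with all $T_e$ orthogonal. *)

theory Defs
  imports Complex_Main
begin

text \<open>2x2 complex matrices, indexed by bool (False = 0, True = 1); entry T i j is row i, column j.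
  Local signatures at a trivalent vertex are functions of the configuration (a,b,c) of bits
  on the incident a-, b-, c-edges.\<close>

type_synonym mat2 = "bool \<Rightarrow> bool \<Rightarrow> complex"
type_synonym sig3 = "bool \<Rightarrow> bool \<Rightarrow> bool \<Rightarrow> complex"

definition mat2_mult :: "mat2 \<Rightarrow> mat2 \<Rightarrow> mat2" where
  "mat2_mult S T = (\<lambda>i k. \<Sum>j\<in>UNIV. S i j * T j k)"

definition mat2_id :: mat2 where
  "mat2_id = (\<lambda>i j. if i = j then 1 else 0)"

definition mat2_transpose :: "mat2 \<Rightarrow> mat2" where
  "mat2_transpose T = (\<lambda>i j. T j i)"

definition mat2_invertible :: "mat2 \<Rightarrow> bool" where
  "mat2_invertible T \<longleftrightarrow> (\<exists>S. mat2_mult T S = mat2_id \<and> mat2_mult S T = mat2_id)"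

definition mat2_orthogonal :: "mat2 \<Rightarrow> bool" where
  "mat2_orthogonal T \<longleftrightarrow> mat2_mult (mat2_transpose T) T = mat2_id \<and> mat2_mult T (mat2_transpose T) = mat2_id"

text \<open>(Ta \<otimes> Tb \<otimes> Tc) applied to a signature (configurations ordered 000,...,111 with the a-bit most
  significant, which is exactly the Kronecker ordering).\<close>
definition tensor3_apply :: "mat2 \<Rightarrow> mat2 \<Rightarrow> mat2 \<Rightarrow> sig3 \<Rightarrow> sig3" where
  "tensor3_apply Ta Tb Tc r = (\<lambda>x y z. \<Sum>x'\<in>UNIV. \<Sum>y'\<in>UNIV. \<Sum>z'\<in>UNIV.
      Ta x x' * Tb y y' * Tc z z' * r x' y' z')"

definition weight3 :: "bool \<Rightarrow> bool \<Rightarrow> bool \<Rightarrow> nat" where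
  "weight3 x y z = of_bool x + of_bool y + of_bool z"

definition parity_ok :: "sig3 \<Rightarrow> bool" where
  "parity_ok m \<longleftrightarrow> (\<forall>x y z. even (weight3 x y z) \<longrightarrow> m x y z = 0)
                 \<or> (\<forall>x y z. odd (weight3 x y z) \<longrightarrow> m x y z = 0)"

text \<open>Periodic hexagonal lattice of size m x n on the torus.
  Black vertices (i,j) and white vertices (i,j), i < m, j < n.
  Edges are named by their direction and their black endpoint:
  black (i,j) -- white (i,j)       is the a-edge (A,i,j),
  black (i,j) -- white (i+1 mod m,j) is the b-edge (B,i,j),
  black (i,j) -- white (i,j+1 mod n) is the c-edge (C,i,j).
  Hence white (i,j) has a-edge (A,i,j), b-edge (B,i-1 mod m,j), c-edge (C,i,j-1 mod n).\<close>

datatype dir = DA | DB | DC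

type_synonym edge_assignment = "dir \<Rightarrow> nat \<Rightarrow> nat \<Rightarrow> mat2"

definition black_ok :: "edge_assignment \<Rightarrow> sig3 \<Rightarrow> nat \<Rightarrow> nat \<Rightarrow> bool" where
  "black_ok T r i j \<longleftrightarrow> parity_ok (tensor3_apply (T DA i j) (T DB i j) (T DC i j) r)"

text \<open>At a white vertex m_v = ((Ta \<otimes> Tb \<otimes> Tc)^t)^{-1} r, i.e. (Ta \<otimes> Tb \<otimes> Tc)^t m_v = r,
  and (Ta \<otimes> Tb \<otimes> Tc)^t = Ta^t \<otimes> Tb^t \<otimes> Tc^t.\<close>
definition white_ok :: "nat \<Rightarrow> nat \<Rightarrow> edge_assignment \<Rightarrow> sig3 \<Rightarrow> nat \<Rightarrow> nat \<Rightarrow> bool" where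
  "white_ok m n T r i j \<longleftrightarrow>
     (\<exists>mv. parity_ok mv \<and>
        tensor3_apply (mat2_transpose (T DA i j))
                      (mat2_transpose (T DB ((i + m - 1) mod m) j))
                      (mat2_transpose (T DC i ((j + n - 1) mod n))) mv = r)"

definition is_realization :: "nat \<Rightarrow> nat \<Rightarrow> sig3 \<Rightarrow> edge_assignment \<Rightarrow> bool" where
  "is_realization m n r T \<longleftrightarrow>
     (\<forall>d i j. i < m \<longrightarrow> j < n \<longrightarrow> mat2_invertible (T d i j)) \<and>
     (\<forall>i j. i < m \<longrightarrow> j < n \<longrightarrow> black_ok T r i j \<and> white_ok m n T r i j)"

definition hex_realizable :: "nat \<Rightarrow> nat \<Rightarrow> sig3 \<Rightarrow> bool" where
  "hex_realizable m n r \<longleftrightarrow> (\<exists>T. is_realization m n r T)"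

definition hex_orth_realizable :: "nat \<Rightarrow> nat \<Rightarrow> sig3 \<Rightarrow> bool" where
  "hex_orth_realizable m n r \<longleftrightarrow>
     (\<exists>T. is_realization m n r T \<and> (\<forall>d i j. i < m \<longrightarrow> j < n \<longrightarrow> mat2_orthogonal (T d i j)))"

text \<open>Polynomials in the 8 signature entries: a finite set S of exponent vectors
  e :: bool\<times>bool\<times>bool \<Rightarrow> nat (one exponent per entry) with coefficients c.
  Distinct exponent vectors give distinct monomials, so the polynomial is nonzero
  iff some coefficient on S is nonzero.\<close>
definition sig_poly_eval :: "((bool \<times> bool \<times> bool \<Rightarrow> nat) \<Rightarrow> complex) \<Rightarrow> (bool \<times> bool \<times> bool \<Rightarrow> nat) set \<Rightarrow> sig3 \<Rightarrow> complex" where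
  "sig_poly_eval c S r = (\<Sum>e\<in>S. c e * (\<Prod>v\<in>UNIV. (case v of (x, y, z) \<Rightarrow> r x y z) ^ e v))"

definition nonzero_sig_poly :: "((bool \<times> bool \<times> bool \<Rightarrow> nat) \<Rightarrow> complex) \<Rightarrow> (bool \<times> bool \<times> bool \<Rightarrow> nat) set \<Rightarrow> bool" where
  "nonzero_sig_poly c S \<longleftrightarrow> finite S \<and> (\<exists>e\<in>S. c e \<noteq> 0)"

end

theory Submission
  imports Defs
begin


definition smono :: "(bool \<times> bool \<times> bool \<Rightarrow> nat) \<Rightarrow> sig3 \<Rightarrow> complex" where
  "smono e r = (\<Prod>v\<in>UNIV. (case v of (x, y, z) \<Rightarrow> r x y z) ^ e v)"

lemma spe_mono: "sig_poly_eval c S r = (\<Sum>e\<in>S. c e * smono e r)"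
  by (simp add: sig_poly_eval_def smono_def)

definition is_poly :: "(sig3 \<Rightarrow> complex) \<Rightarrow> bool" where
  "is_poly f \<longleftrightarrow> (\<exists>c S. finite S \<and> (\<forall>r. f r = sig_poly_eval c S r))"

lemma poly_const: "is_poly (\<lambda>r. k)"
  unfolding is_poly_def spe_mono
  by (rule exI[of _ "\<lambda>_. k"], rule exI[of _ "{\<lambda>_. 0}"]) (simp add: smono_def)

lemma poly_var: "is_poly (\<lambda>r. r x y z)"
proof -
  have "smono (\<lambda>v. if v = (x,y,z) then 1 else 0) r = r x y z" for r
  proof -
    have "smono (\<lambda>v. if v = (x,y,z) then 1 else 0) r = (\<Prod>v\<in>UNIV. if v = (x,y,z) then (case v of (x, y, z) \<Rightarrow> r x y z) else 1)"
        unfolding smono_def by (rule prod.cong) auto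
    also have "\<dots> = r x y z" by (subst prod.delta) simp_all
    finally show ?thesis .
  qed
  then show ?thesis unfolding is_poly_def spe_mono
    by (intro exI[of _ "\<lambda>_. 1"] exI[of _ "{\<lambda>v. if v = (x,y,z) then 1 else 0}"]) simp
qed

lemma poly_add: assumes "is_poly f" "is_poly g" shows "is_poly (\<lambda>r. f r + g r)"
proof -
  obtain c1 S1 where 1: "finite S1" "\<And>r. f r = (\<Sum>e\<in>S1. c1 e * smono e r)"
    using assms(1) unfolding is_poly_def spe_mono by blast
  obtain c2 S2 where 2: "finite S2" "\<And>r. g r = (\<Sum>e\<in>S2. c2 e * smono e r)"
    using assms(2) unfolding is_poly_def spe_mono by blast
  define c where "c e = (if e \<in> S1 then c1 e else 0) + (if e \<in> S2 then c2 e else 0)" for e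
  have "f r + g r = (\<Sum>e\<in>S1 \<union> S2. c e * smono e r)" for r
  proof -
    have a: "(\<Sum>e\<in>S1 \<union> S2. (if e \<in> S1 then c1 e else 0) * smono e r) = (\<Sum>e\<in>S1. c1 e * smono e r)"
      by (rule sum.mono_neutral_cong_right) (use 1 2 in auto)
    have b: "(\<Sum>e\<in>S1 \<union> S2. (if e \<in> S2 then c2 e else 0) * smono e r) = (\<Sum>e\<in>S2. c2 e * smono e r)"
      by (rule sum.mono_neutral_cong_right) (use 1 2 in auto)
    show ?thesis unfolding c_def 1 2 distrib_right sum.distrib a b ..
  qed
  then show ?thesis unfolding is_poly_def spe_mono using 1 2 by blast
qed

lemma smono_add: "smono (\<lambda>v. a v + b v) r = smono a r * smono b r"
  unfolding smono_def by (simp add: power_add prod.distrib)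

lemma poly_mult: assumes "is_poly f" "is_poly g" shows "is_poly (\<lambda>r. f r * g r)"
proof -
  obtain c1 S1 where 1: "finite S1" "\<And>r. f r = (\<Sum>e\<in>S1. c1 e * smono e r)"
    using assms(1) unfolding is_poly_def spe_mono by blast
  obtain c2 S2 where 2: "finite S2" "\<And>r. g r = (\<Sum>e\<in>S2. c2 e * smono e r)"
    using assms(2) unfolding is_poly_def spe_mono by blast
  define h where "h p = (\<lambda>v. fst p v + snd p v)" for p :: "(bool \<times> bool \<times> bool \<Rightarrow> nat) \<times> (bool \<times> bool \<times> bool \<Rightarrow> nat)"
  define c where "c e = (\<Sum>p\<in>{p\<in>S1 \<times> S2. h p = e}. c1 (fst p) * c2 (snd p))" for e
  have fin: "finite (S1 \<times> S2)" using 1 2 by simp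
  have "f r * g r = (\<Sum>e\<in>h ` (S1 \<times> S2). c e * smono e r)" for r
  proof -
    have "f r * g r = (\<Sum>p\<in>S1 \<times> S2. c1 (fst p) * c2 (snd p) * smono (h p) r)"
      unfolding 1 2 sum_product sum.cartesian_product h_def smono_add
      by (rule sum.cong) (auto simp: algebra_simps)
    also have "\<dots> = (\<Sum>e\<in>h ` (S1 \<times> S2). \<Sum>p\<in>{p\<in>S1 \<times> S2. h p = e}. c1 (fst p) * c2 (snd p) * smono (h p) r)"
      by (rule sum.image_gen[OF fin])
    also have "\<dots> = (\<Sum>e\<in>h ` (S1 \<times> S2). c e * smono e r)"
      unfolding c_def sum_distrib_right by (rule sum.cong) auto
    finally show ?thesis .
  qed
  then show ?thesis unfolding is_poly_def spe_mono using fin by blast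
qed

lemma poly_sum: assumes "finite I" "\<And>i. is_poly (f i)" shows "is_poly (\<lambda>r. \<Sum>i\<in>I. f i r)"
  using assms(1) by (induction I rule: finite_induct) (auto intro: poly_const poly_add assms(2))

lemma poly_nonzero: assumes "is_poly f" "f r0 \<noteq> 0" shows "\<exists>c S. nonzero_sig_poly c S \<and> (\<forall>r. f r = sig_poly_eval c S r)"
proof -
  obtain c S where 1: "finite S" "\<And>r. f r = sig_poly_eval c S r"
    using assms(1) unfolding is_poly_def by blast
  have "\<exists>e\<in>S. c e \<noteq> 0"
  proof (rule ccontr)
    assume "\<not> ?thesis"
    then have "sig_poly_eval c S r0 = 0" unfolding spe_mono by simp
    with assms(2) 1 show False by simp
  qed
  with 1 show ?thesis unfolding nonzero_sig_poly_def by blast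
qed




definition eps :: "bool \<Rightarrow> bool \<Rightarrow> complex" where
  "eps y y' = (if y = y' then 0 else if y then -1 else 1)"

definition QA :: "sig3 \<Rightarrow> bool \<Rightarrow> bool \<Rightarrow> complex" where
  "QA s x x' = (\<Sum>y\<in>UNIV. \<Sum>y'\<in>UNIV. \<Sum>z\<in>UNIV. \<Sum>z'\<in>UNIV. s x y z * s x' y' z' * eps y y' * eps z z')"

definition mdet :: "mat2 \<Rightarrow> complex" where
  "mdet A = A False False * A True True - A False True * A True False"

definition rot :: "sig3 \<Rightarrow> sig3" where "rot s = (\<lambda>x y z. s y z x)"

definition app1 :: "mat2 \<Rightarrow> sig3 \<Rightarrow> sig3" where "app1 A s = (\<lambda>x y z. \<Sum>x'\<in>UNIV. A x x' * s x' y z)"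
definition app2 :: "mat2 \<Rightarrow> sig3 \<Rightarrow> sig3" where "app2 A s = (\<lambda>x y z. \<Sum>y'\<in>UNIV. A y y' * s x y' z)"
definition app3 :: "mat2 \<Rightarrow> sig3 \<Rightarrow> sig3" where "app3 A s = (\<lambda>x y z. \<Sum>z'\<in>UNIV. A z z' * s x y z')"

lemma tensor_app: "tensor3_apply A B C s = app1 A (app2 B (app3 C s))"
  unfolding tensor3_apply_def app1_def app2_def app3_def
  by (rule ext)+ (simp add: UNIV_bool algebra_simps)

lemma QA_app1: "QA (app1 A s) x x' = (\<Sum>i\<in>UNIV. \<Sum>j\<in>UNIV. A x i * A x' j * QA s i j)"
  unfolding QA_def app1_def by (simp add: UNIV_bool eps_def algebra_simps)

lemma QA_app2: "QA (app2 A s) x x' = mdet A * QA s x x'"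
  unfolding QA_def app2_def mdet_def by (simp add: UNIV_bool eps_def algebra_simps)

lemma QA_app3: "QA (app3 A s) x x' = mdet A * QA s x x'"
  unfolding QA_def app3_def mdet_def by (simp add: UNIV_bool eps_def algebra_simps)

lemma QA_tensor: "QA (tensor3_apply A B C s) x x' = mdet B * mdet C * (\<Sum>i\<in>UNIV. \<Sum>j\<in>UNIV. A x i * A x' j * QA s i j)"
  unfolding tensor_app QA_app1 QA_app2 QA_app3 by (simp add: UNIV_bool algebra_simps)

lemma QA_parity: assumes "parity_ok s" shows "QA s False True = 0" "QA s True False = 0"
proof -
  have "QA s False True = 0 \<and> QA s True False = 0"
    using assms unfolding parity_ok_def
  proof
    assume E: "\<forall>x y z. even (weight3 x y z) \<longrightarrow> s x y z = 0"
    have "s False False False = 0" "s False True True = 0" "s True False True = 0" "s True True False = 0"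
      by (rule E[rule_format]; simp add: weight3_def)+
    then show ?thesis unfolding QA_def by (simp add: UNIV_bool eps_def)
  next
    assume E: "\<forall>x y z. odd (weight3 x y z) \<longrightarrow> s x y z = 0"
    have "s True True True = 0" "s True False False = 0" "s False True False = 0" "s False False True = 0"
      by (rule E[rule_format]; simp add: weight3_def)+
    then show ?thesis unfolding QA_def by (simp add: UNIV_bool eps_def)
  qed
  then show "QA s False True = 0" "QA s True False = 0" by auto
qed

lemma rot_tensor: "rot (tensor3_apply A B C s) = tensor3_apply C A B (rot s)"
  unfolding rot_def tensor3_apply_def by (rule ext)+ (simp add: UNIV_bool algebra_simps)

lemma rot_parity: "parity_ok (rot s) \<longleftrightarrow> parity_ok s"
proof -
  have w: "\<And>x y z. weight3 y z x = weight3 x y z" by (simp add: weight3_def)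
  have a: "(\<forall>x y z. even (weight3 x y z) \<longrightarrow> s y z x = 0) \<longleftrightarrow> (\<forall>x y z. even (weight3 x y z) \<longrightarrow> s x y z = 0)"
    by (metis w)
  have b: "(\<forall>x y z. odd (weight3 x y z) \<longrightarrow> s y z x = 0) \<longleftrightarrow> (\<forall>x y z. odd (weight3 x y z) \<longrightarrow> s x y z = 0)"
    by (metis w)
  show ?thesis unfolding parity_ok_def rot_def using a b by simp
qed

lemma inv_mdet: assumes "mat2_invertible A" shows "mdet A \<noteq> 0"
proof -
  obtain S where S: "mat2_mult A S = mat2_id" using assms unfolding mat2_invertible_def by blast
  have e: "\<And>i k. (\<Sum>j\<in>UNIV. A i j * S j k) = (if i = k then 1 else 0)"
    using S unfolding mat2_mult_def mat2_id_def by metis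
  have "mdet A * mdet S = (\<Sum>j\<in>UNIV. A False j * S j False) * (\<Sum>j\<in>UNIV. A True j * S j True)
      - (\<Sum>j\<in>UNIV. A False j * S j True) * (\<Sum>j\<in>UNIV. A True j * S j False)"
    unfolding mdet_def by (simp add: UNIV_bool algebra_simps)
  also have "\<dots> = 1" unfolding e by simp
  finally show ?thesis by auto
qed

lemma alg:
  fixes a b d e c y0 y1 q00 q01 q10 q11 :: complex
  assumes q: "q00 = c*(a*y0*a + d*y1*d)" "q01 = c*(a*y0*b + d*y1*e)" "q10 = c*(b*y0*a+e*y1*d)" "q11 = c*(b*y0*b + e*y1*e)"
    and X: "a*d*q00 + a*e*q01 + b*d*q10 + b*e*q11 = 0"
    and det: "a*e - b*d \<noteq> 0" and nz: "q01*(q00+q11) \<noteq> 0"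
  shows "a*d + b*e = 0"
proof -
  define \<sigma> where "\<sigma> = y0*(a*a+b*b) + y1*(d*d+e*e)"
  have X': "a*d*q00 + a*e*q01 + b*d*q10 + b*e*q11 = c*(a*d+b*e)*\<sigma>"
    unfolding q \<sigma>_def by (simp add: algebra_simps)
  have I: "(a*e-b*d)*(q01*(q00+q11)) = c*(a*e-b*d)*\<sigma>*q01"
    unfolding q \<sigma>_def by (simp add: algebra_simps)
  have "c \<noteq> 0" "\<sigma> \<noteq> 0" using I det nz by auto
  then show ?thesis using X X' by simp
qed




lemma tr_apply: "mat2_transpose A i j = A j i" by (simp add: mat2_transpose_def)

lemma core:
  assumes bl: "parity_ok (tensor3_apply A B C r)" and pm: "parity_ok mv"
    and wh: "tensor3_apply (mat2_transpose A) B' C' mv = r"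
    and dA: "mdet A \<noteq> 0" and dB: "mdet B \<noteq> 0" and dC: "mdet C \<noteq> 0"
    and nz: "QA r False True * (QA r False False + QA r True True) \<noteq> 0"
  shows "A False False * A True False + A False True * A True True = 0"
proof -
  have "QA (tensor3_apply A B C r) False True = 0" using QA_parity[OF bl] by simp
  then have X0: "mdet B * mdet C * (\<Sum>i\<in>UNIV. \<Sum>j\<in>UNIV. A False i * A True j * QA r i j) = 0"
    unfolding QA_tensor .
  then have X: "(\<Sum>i\<in>UNIV. \<Sum>j\<in>UNIV. A False i * A True j * QA r i j) = 0" using dB dC by simp
  have y: "QA mv False True = 0" "QA mv True False = 0" using QA_parity[OF pm] by auto
  define c where "c = mdet B' * mdet C'"
  have Q: "QA r i j = c * (A False i * QA mv False False * A False j + A True i * QA mv True True * A True j)" for i j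
  proof -
    have "QA r i j = QA (tensor3_apply (mat2_transpose A) B' C' mv) i j" using wh by simp
    also have "\<dots> = c * (A False i * QA mv False False * A False j + A True i * QA mv True True * A True j)"
      unfolding QA_tensor c_def by (simp add: UNIV_bool y tr_apply algebra_simps)
    finally show ?thesis .
  qed
  show ?thesis
  proof (rule alg[OF Q Q Q Q])
    show "A False False * A True False * QA r False False + A False False * A True True * QA r False True +
      A False True * A True False * QA r True False + A False True * A True True * QA r True True = 0"
      using X by (simp add: UNIV_bool algebra_simps)
    show "A False False * A True True - A False True * A True False \<noteq> 0" using dA unfolding mdet_def .
    show "QA r False True * (QA r False False + QA r True True) \<noteq> 0" by fact
  qed
qed




lemma row_scale: "tensor3_apply (\<lambda>i k. A i k * wa i) (\<lambda>i k. B i k * wb i) (\<lambda>i k. C i k * wc i) s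
   = (\<lambda>x y z. wa x * wb y * wc z * tensor3_apply A B C s x y z)"
  unfolding tensor3_apply_def by (rule ext)+ (simp add: UNIV_bool algebra_simps)

lemma col_scale: "tensor3_apply (\<lambda>i k. A k i * wa k) (\<lambda>i k. B k i * wb k) (\<lambda>i k. C k i * wc k) s
   = tensor3_apply (mat2_transpose A) (mat2_transpose B) (mat2_transpose C) (\<lambda>x y z. wa x * wb y * wc z * s x y z)"
  unfolding tensor3_apply_def mat2_transpose_def by (rule ext)+ (simp add: UNIV_bool algebra_simps)

lemma parity_scale: "parity_ok s \<Longrightarrow> parity_ok (\<lambda>x y z. f x y z * s x y z)"
  unfolding parity_ok_def by auto

lemma orth2:
  fixes o00 o01 o10 o11 :: complex
  assumes h1: "o00*o00+o01*o01=1" and h2: "o10*o10+o11*o11=1" and h3: "o00*o10+o01*o11=0"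
  shows "o00*o00+o10*o10=1" "o01*o01+o11*o11 = 1" "o00*o01+o10*o11=0"
proof -
  define d where "d = o00*o11 - o01*o10"
  have "d*d = (o00*o00+o01*o01)*(o10*o10+o11*o11) - (o00*o10+o01*o11)*(o00*o10+o01*o11)"
    unfolding d_def by (simp add: algebra_simps)
  then have dd: "d*d = 1" using h1 h2 h3 by simp
  have "o11*d - o00 = o00*(o10*o10+o11*o11 - 1) - o10*(o00*o10+o01*o11)"
    unfolding d_def by (simp add: algebra_simps)
  then have e1: "o11*d = o00" using h2 h3 by simp
  have "o10*d + o01 = o01*(1 - (o10*o10+o11*o11)) + o11*(o00*o10+o01*o11)"
    unfolding d_def by (simp add: algebra_simps)
  then have e2: "o10*d = - o01" using h2 h3 by (simp add: eq_neg_iff_add_eq_0)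
  have o00: "o00 = o11*d" using e1 by simp
  have o01: "o01 = -(o10*d)" using e2 by simp
  have s1: "o00*o00 = o11*o11"
  proof -
    have "o00*o00 = o11*o11*(d*d)" unfolding o00 by (simp add: algebra_simps)
    also have "\<dots> = o11*o11" unfolding dd by simp
    finally show ?thesis .
  qed
  have s2: "o01*o01 = o10*o10"
  proof -
    have "o01*o01 = o10*o10*(d*d)" unfolding o01 by (simp add: algebra_simps)
    also have "\<dots> = o10*o10" unfolding dd by simp
    finally show ?thesis .
  qed
  have e3: "o01*d = - o10"
  proof -
    have "o01*d = - (o10*(d*d))" unfolding o01 by (simp add: algebra_simps)
    also have "\<dots> = - o10" unfolding dd by simp
    finally show ?thesis .
  qed
  show "o00*o00+o10*o10=1" using h1 s2 by simp
  have "o01*o01+o11*o11 = o00*o00 + o01*o01" unfolding s1 by (rule add.commute)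
  then show "o01*o01+o11*o11 = 1" using h1 by simp
  have "o00*o01+o10*o11 = o11*(o01*d + o10)" unfolding o00 by (simp add: algebra_simps)
  then show "o00*o01+o10*o11=0" using e3 by simp
qed

definition Pc :: "sig3 \<Rightarrow> complex" where
  "Pc s = QA s False True * (QA s False False + QA s True True)"

definition Ppoly :: "sig3 \<Rightarrow> complex" where
  "Ppoly r = Pc r * Pc (rot r) * Pc (rot (rot r))"

lemma Ppoly_poly: "is_poly Ppoly"
  unfolding Ppoly_def[abs_def] Pc_def QA_def rot_def
  by (intro poly_mult poly_add poly_sum poly_var poly_const finite_UNIV)

lemma Ppoly_witness: "Ppoly (\<lambda>x y z. if (x,y,z) \<in> {(False,True,True),(True,False,False),(True,False,True),(True,True,False)} then 1 else 0) \<noteq> 0"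
  unfolding Ppoly_def Pc_def QA_def rot_def by (simp add: UNIV_bool eps_def)

definition gw :: "mat2 \<Rightarrow> bool \<Rightarrow> complex" where
  "gw A i = 1 / csqrt (A i False * A i False + A i True * A i True)"

definition nrm :: "mat2 \<Rightarrow> mat2" where
  "nrm A = (\<lambda>i k. A i k * gw A i)"

lemma nrm_orth:
  assumes inv: "mat2_invertible A" and ro: "A False False * A True False + A False True * A True True = 0"
  shows "mat2_orthogonal (nrm A)" "gw A False \<noteq> 0" "gw A True \<noteq> 0"
proof -
  define g0 where "g0 = A False False * A False False + A False True * A False True"
  define g1 where "g1 = A True False * A True False + A True True * A True True"
  have "g0*g1 - (A False False * A True False + A False True * A True True)^2 = mdet A * mdet A"
    unfolding g0_def g1_def mdet_def by (simp add: algebra_simps power2_eq_square)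
  then have "g0*g1 = mdet A * mdet A" using ro by simp
  then have g0: "g0 \<noteq> 0" and g1: "g1 \<noteq> 0" using inv_mdet[OF inv] by auto
  have sq: "csqrt z * csqrt z = z" for z using power2_csqrt[of z] by (simp add: power2_eq_square)
  have w0: "gw A False * gw A False * g0 = 1" unfolding gw_def g0_def[symmetric]
    using g0 sq[of g0] by (simp add: field_simps)
  have w1: "gw A True * gw A True * g1 = 1" unfolding gw_def g1_def[symmetric]
    using g1 sq[of g1] by (simp add: field_simps)
  show "gw A False \<noteq> 0" "gw A True \<noteq> 0" using w0 w1 by auto
  define o00 where "o00 = nrm A False False"
  define o01 where "o01 = nrm A False True"
  define o10 where "o10 = nrm A True False"
  define o11 where "o11 = nrm A True True"
  have h1: "o00*o00+o01*o01=1" using w0 unfolding o00_def o01_def nrm_def g0_def by (simp add: algebra_simps)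
  have h2: "o10*o10+o11*o11=1" using w1 unfolding o10_def o11_def nrm_def g1_def by (simp add: algebra_simps)
  have "o00*o10+o01*o11 = gw A False * gw A True * (A False False * A True False + A False True * A True True)"
    unfolding o00_def o01_def o10_def o11_def nrm_def by (simp add: algebra_simps)
  then have h3: "o00*o10+o01*o11=0" using ro by simp
  note c = orth2[OF h1 h2 h3]
  show "mat2_orthogonal (nrm A)"
    unfolding mat2_orthogonal_def mat2_mult_def mat2_transpose_def mat2_id_def
    using h1 h2 h3 c unfolding o00_def o01_def o10_def o11_def
    by (simp add: UNIV_bool fun_eq_iff all_bool_eq mult.commute)
qed

lemma orth_inv: "mat2_orthogonal A \<Longrightarrow> mat2_invertible A"
  unfolding mat2_orthogonal_def mat2_invertible_def by blast

lemma white_scale: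
  assumes wa: "\<And>x. wa x \<noteq> 0" and wb: "\<And>x. wb x \<noteq> 0" and wc: "\<And>x. wc x \<noteq> 0"
    and pm: "parity_ok mv" and eq: "tensor3_apply (mat2_transpose A) (mat2_transpose B) (mat2_transpose C) mv = r"
  shows "\<exists>mv'. parity_ok mv' \<and> tensor3_apply (mat2_transpose (\<lambda>i k. A i k * wa i))
      (mat2_transpose (\<lambda>i k. B i k * wb i)) (mat2_transpose (\<lambda>i k. C i k * wc i)) mv' = r"
proof (intro exI conjI)
  let ?mv = "\<lambda>x y z. (1 / (wa x * wb y * wc z)) * mv x y z"
  show "parity_ok ?mv" by (rule parity_scale[OF pm])
  have tr: "mat2_transpose (\<lambda>i k. X i k * w i) = (\<lambda>i k. X k i * w k)" for X :: mat2 and w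
    unfolding mat2_transpose_def ..
  have "(\<lambda>x y z. wa x * wb y * wc z * ?mv x y z) = mv"
    using wa wb wc by (intro ext) simp
  then show "tensor3_apply (mat2_transpose (\<lambda>i k. A i k * wa i))
      (mat2_transpose (\<lambda>i k. B i k * wb i)) (mat2_transpose (\<lambda>i k. C i k * wc i)) ?mv = r"
    unfolding tr col_scale using eq by simp
qed

lemma black_scale:
  assumes "parity_ok (tensor3_apply A B C r)"
  shows "parity_ok (tensor3_apply (\<lambda>i k. A i k * wa i) (\<lambda>i k. B i k * wb i) (\<lambda>i k. C i k * wc i) r)"
  unfolding row_scale by (rule parity_scale[OF assms, of "\<lambda>x y z. wa x * wb y * wc z"])

lemma idx: "i < m \<Longrightarrow> (Suc i mod m + m - 1) mod m = i"
proof (cases "Suc i < m")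
  case True
  then show ?thesis by simp
next
  case False
  assume "i < m"
  then have "Suc i = m" using False by simp
  then show ?thesis by simp
qed




lemma wit: "\<exists>r0. Ppoly r0 \<noteq> 0" using Ppoly_witness by blast

lemma poly_ok: "\<exists>c S. nonzero_sig_poly c S \<and> (\<forall>r. Ppoly r = sig_poly_eval c S r)"
proof -
  obtain r0 where "Ppoly r0 \<noteq> 0" using wit by blast
  then show ?thesis by (rule poly_nonzero[OF Ppoly_poly])
qed

lemma rows_orth:
  assumes m: "m \<ge> 1" and n: "n \<ge> 1" and R: "is_realization m n r T"
    and p1: "Pc r \<noteq> 0" and p2: "Pc (rot r) \<noteq> 0" and p3: "Pc (rot (rot r)) \<noteq> 0"
    and i: "i < m" and j: "j < n"
  shows "T d i j False False * T d i j True False + T d i j False True * T d i j True True = 0"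
proof -
  have inv: "\<And>d i j. i < m \<Longrightarrow> j < n \<Longrightarrow> mdet (T d i j) \<noteq> 0"
    using R inv_mdet unfolding is_realization_def by blast
  have ok: "\<And>i j. i < m \<Longrightarrow> j < n \<Longrightarrow> black_ok T r i j \<and> white_ok m n T r i j"
    using R unfolding is_realization_def by blast
  have bl: "parity_ok (tensor3_apply (T DA i j) (T DB i j) (T DC i j) r)"
    using ok[OF i j] unfolding black_ok_def by blast
  have i1: "(i + m - 1) mod m < m" and j1: "(j + n - 1) mod n < n" using m n by auto
  have i2: "Suc i mod m < m" and j2: "Suc j mod n < n" using m n by auto
  show ?thesis
  proof (cases d)
    case DA
    obtain mv where pm: "parity_ok mv" and wh: "tensor3_apply (mat2_transpose (T DA i j))
       (mat2_transpose (T DB ((i + m - 1) mod m) j)) (mat2_transpose (T DC i ((j + n - 1) mod n))) mv = r"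
      using ok[OF i j] unfolding white_ok_def by blast
    show ?thesis unfolding DA
      by (rule core[OF bl pm wh inv[OF i j] inv[OF i j] inv[OF i j]]) (use p1 in \<open>simp only: Pc_def not_False_eq_True\<close>)
  next
    case DB
    obtain mv where pm: "parity_ok mv" and wh: "tensor3_apply (mat2_transpose (T DA (Suc i mod m) j))
       (mat2_transpose (T DB ((Suc i mod m + m - 1) mod m) j)) (mat2_transpose (T DC (Suc i mod m) ((j + n - 1) mod n))) mv = r"
      using ok[OF i2 j] unfolding white_ok_def by blast
    have wh': "tensor3_apply (mat2_transpose (T DB i j)) (mat2_transpose (T DC (Suc i mod m) ((j + n - 1) mod n)))
       (mat2_transpose (T DA (Suc i mod m) j)) (rot (rot mv)) = rot (rot r)"
      using arg_cong[OF wh, of "\<lambda>x. rot (rot x)"] unfolding rot_tensor idx[OF i] .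
    have bl': "parity_ok (tensor3_apply (T DB i j) (T DC i j) (T DA i j) (rot (rot r)))"
    proof -
      have "parity_ok (rot (rot (tensor3_apply (T DA i j) (T DB i j) (T DC i j) r)))"
        using bl by (simp only: rot_parity)
      then show ?thesis unfolding rot_tensor .
    qed
    have pm': "parity_ok (rot (rot mv))" using pm by (simp only: rot_parity)
    show ?thesis unfolding DB
      by (rule core[OF bl' pm' wh' inv[OF i j] inv[OF i j] inv[OF i j]]) (use p3 in \<open>simp only: Pc_def not_False_eq_True\<close>)
  next
    case DC
    obtain mv where pm: "parity_ok mv" and wh: "tensor3_apply (mat2_transpose (T DA i (Suc j mod n)))
       (mat2_transpose (T DB ((i + m - 1) mod m) (Suc j mod n))) (mat2_transpose (T DC i ((Suc j mod n + n - 1) mod n))) mv = r"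
      using ok[OF i j2] unfolding white_ok_def by blast
    have wh': "tensor3_apply (mat2_transpose (T DC i j)) (mat2_transpose (T DA i (Suc j mod n)))
       (mat2_transpose (T DB ((i + m - 1) mod m) (Suc j mod n))) (rot mv) = rot r"
      using arg_cong[OF wh, of "\<lambda>x. rot x"] unfolding rot_tensor idx[OF j] .
    have bl': "parity_ok (tensor3_apply (T DC i j) (T DA i j) (T DB i j) (rot r))"
    proof -
      have "parity_ok (rot (tensor3_apply (T DA i j) (T DB i j) (T DC i j) r))"
        using bl by (simp only: rot_parity)
      then show ?thesis unfolding rot_tensor .
    qed
    have pm': "parity_ok (rot mv)" using pm by (simp only: rot_parity)
    show ?thesis unfolding DC
      by (rule core[OF bl' pm' wh' inv[OF i j] inv[OF i j] inv[OF i j]]) (use p2 in \<open>simp only: Pc_def not_False_eq_True\<close>)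
  qed
qed

theorem theorem3p14:
  fixes m n :: nat
  assumes "m \<ge> 1" and "n \<ge> 1"
  shows "\<exists>c S. nonzero_sig_poly c S \<and>
           (\<forall>r :: sig3. sig_poly_eval c S r \<noteq> 0 \<longrightarrow>
              (hex_realizable m n r \<longleftrightarrow> hex_orth_realizable m n r))"
proof -
  obtain c S where cS: "nonzero_sig_poly c S" and ev: "\<forall>r. Ppoly r = sig_poly_eval c S r"
    using poly_ok by blast
  have main: "hex_realizable m n r \<longleftrightarrow> hex_orth_realizable m n r" if nz: "sig_poly_eval c S r \<noteq> 0" for r
  proof
    assume "hex_orth_realizable m n r"
    then show "hex_realizable m n r" unfolding hex_orth_realizable_def hex_realizable_def by blast
  next
    assume "hex_realizable m n r"
    then obtain T where R: "is_realization m n r T" unfolding hex_realizable_def by blast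
    have "Ppoly r \<noteq> 0" using nz ev by simp
    then have p1: "Pc r \<noteq> 0" and p2: "Pc (rot r) \<noteq> 0" and p3: "Pc (rot (rot r)) \<noteq> 0"
      unfolding Ppoly_def by auto
    have invT: "\<And>d i j. i < m \<Longrightarrow> j < n \<Longrightarrow> mat2_invertible (T d i j)"
      using R unfolding is_realization_def by blast
    have ok: "\<And>i j. i < m \<Longrightarrow> j < n \<Longrightarrow> black_ok T r i j \<and> white_ok m n T r i j"
      using R unfolding is_realization_def by blast
    have NO: "\<And>d i j. i < m \<Longrightarrow> j < n \<Longrightarrow> mat2_orthogonal (nrm (T d i j)) \<and>
        (\<forall>x. gw (T d i j) x \<noteq> 0)"
    proof -
      fix d i j assume i: "i < m" and j: "j < n"
      note o = nrm_orth[OF invT[OF i j] rows_orth[OF assms R p1 p2 p3 i j]]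
      have "\<forall>x. gw (T d i j) x \<noteq> 0"
      proof
        fix x show "gw (T d i j) x \<noteq> 0" using o(2,3) by (cases x) simp_all
      qed
      then show "mat2_orthogonal (nrm (T d i j)) \<and> (\<forall>x. gw (T d i j) x \<noteq> 0)"
        using o(1) by blast
    qed
    define T' where "T' d i j = nrm (T d i j)" for d i j
    have "is_realization m n r T'"
      unfolding is_realization_def
    proof (intro conjI allI impI)
      fix d i j assume i: "i < m" and j: "j < n"
      show "mat2_invertible (T' d i j)" unfolding T'_def using NO[OF i j] orth_inv by blast
    next
      fix i j assume i: "i < m" and j: "j < n"
      show "black_ok T' r i j" using ok[OF i j] unfolding black_ok_def T'_def nrm_def
        by (intro black_scale) blast
      have i1: "(i + m - 1) mod m < m" and j1: "(j + n - 1) mod n < n" using assms by auto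
      obtain mv where pm: "parity_ok mv" and wh: "tensor3_apply (mat2_transpose (T DA i j))
       (mat2_transpose (T DB ((i + m - 1) mod m) j)) (mat2_transpose (T DC i ((j + n - 1) mod n))) mv = r"
        using ok[OF i j] unfolding white_ok_def by blast
      show "white_ok m n T' r i j" unfolding white_ok_def T'_def nrm_def
        by (rule white_scale[OF _ _ _ pm wh]) (use NO[OF i j] NO[OF i1 j] NO[OF i j1] in auto)
    qed
    moreover have "\<forall>d i j. i < m \<longrightarrow> j < n \<longrightarrow> mat2_orthogonal (T' d i j)"
      unfolding T'_def using NO by blast
    ultimately show "hex_orth_realizable m n r" unfolding hex_orth_realizable_def by blast
  qed
  show ?thesis using cS main by blast
qed


end
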